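(* Let $M$ be a quasi-permutation matrix. The permutations that are minimal (for the pattern order) among permutations containing $M$ as a submatrix are exactly the permutations whose matrices can be obtained from $M$ by inserting rows, each containing exactly one entry $1$, this entry lying in a column of $M$ consisting only of $0$'s, and inserting columns, each containing exactly one entry $1$, this entry lying in a row of $M$ consisting only of $0$'s.
   Context: A quasi-permutation matrix is a binary matrix with at most one entry $1$ in each row and in each column. A permutation $\sigma$ of $\{1,\dots,n\}$ is identified with its permutation matrix $M_\sigma$ ($M_\sigma(i,j)=1$ iff $i=\sigma(j)$, rows numbered bottom to top). A matrix $M$ is a submatrix of $N$ if $M$ is obtained from $N$ by deleting some rows and/or columns; the pattern order on permutations is the submatrix order restricted to permutation matrices. *)

theory Defs
  imports "HOL-Combinatorics.Permutations"
begin

text \<open>A binary matrix with r rows and c columns is given by its dimensions and a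
  function A :: nat => nat => bool; only entries A i j with i < r, j < c matter.
  Row/column indices start at 0.\<close>

definition quasi_perm :: "nat \<Rightarrow> nat \<Rightarrow> (nat \<Rightarrow> nat \<Rightarrow> bool) \<Rightarrow> bool" where
  "quasi_perm r c A \<longleftrightarrow>
     (\<forall>i<r. \<forall>j<c. \<forall>j'<c. A i j \<and> A i j' \<longrightarrow> j = j') \<and>
     (\<forall>j<c. \<forall>i<r. \<forall>i'<r. A i j \<and> A i' j \<longrightarrow> i = i')"

definition perm_mat :: "(nat \<Rightarrow> nat) \<Rightarrow> nat \<Rightarrow> nat \<Rightarrow> bool" where
  "perm_mat \<sigma> i j \<longleftrightarrow> i = \<sigma> j"

definition submatrix ::
  "nat \<Rightarrow> nat \<Rightarrow> (nat \<Rightarrow> nat \<Rightarrow> bool) \<Rightarrow> nat \<Rightarrow> nat \<Rightarrow> (nat \<Rightarrow> nat \<Rightarrow> bool) \<Rightarrow> bool" where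
  "submatrix r c A R C B \<longleftrightarrow>
     (\<exists>f g. strict_mono_on {..<r} f \<and> f ` {..<r} \<subseteq> {..<R} \<and>
            strict_mono_on {..<c} g \<and> g ` {..<c} \<subseteq> {..<C} \<and>
            (\<forall>i<r. \<forall>j<c. A i j = B (f i) (g j)))"

definition pattern_le :: "nat \<Rightarrow> (nat \<Rightarrow> nat) \<Rightarrow> nat \<Rightarrow> (nat \<Rightarrow> nat) \<Rightarrow> bool" where
  "pattern_le m \<tau> n \<sigma> \<longleftrightarrow> submatrix m m (perm_mat \<tau>) n n (perm_mat \<sigma>)"

definition minimal_containing ::
  "nat \<Rightarrow> nat \<Rightarrow> (nat \<Rightarrow> nat \<Rightarrow> bool) \<Rightarrow> nat \<Rightarrow> (nat \<Rightarrow> nat) \<Rightarrow> bool" where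
  "minimal_containing r c A n \<sigma> \<longleftrightarrow>
     \<sigma> permutes {..<n} \<and> submatrix r c A n n (perm_mat \<sigma>) \<and>
     (\<forall>m \<tau>. \<tau> permutes {..<m} \<and> submatrix r c A m m (perm_mat \<tau>) \<and> pattern_le m \<tau> n \<sigma>
        \<longrightarrow> m = n \<and> \<tau> = \<sigma>)"

definition obtained_by_insertion ::
  "nat \<Rightarrow> nat \<Rightarrow> (nat \<Rightarrow> nat \<Rightarrow> bool) \<Rightarrow> nat \<Rightarrow> nat \<Rightarrow> (nat \<Rightarrow> nat \<Rightarrow> bool) \<Rightarrow> bool" where
  "obtained_by_insertion r c A R C B \<longleftrightarrow>
     (\<exists>f g. strict_mono_on {..<r} f \<and> f ` {..<r} \<subseteq> {..<R} \<and>
            strict_mono_on {..<c} g \<and> g ` {..<c} \<subseteq> {..<C} \<and>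
            (\<forall>i<r. \<forall>j<c. A i j = B (f i) (g j)) \<and>
            (\<forall>i<R. i \<notin> f ` {..<r} \<longrightarrow>
               (\<exists>!j. j < C \<and> B i j) \<and>
               (\<forall>j<C. B i j \<longrightarrow> (\<exists>j'<c. j = g j' \<and> (\<forall>i'<r. \<not> A i' j')))) \<and>
            (\<forall>j<C. j \<notin> g ` {..<c} \<longrightarrow>
               (\<exists>!i. i < R \<and> B i j) \<and>
               (\<forall>i<R. B i j \<longrightarrow> (\<exists>i'<r. i = f i' \<and> (\<forall>j'<c. \<not> A i' j')))))"

end

theory Submission imports Defs begin

lemma enum_set:
  fixes X :: "nat set"
  assumes "finite X"
  shows "strict_mono_on {..<card X} (\<lambda>j. sorted_list_of_set X ! j)"
    and "(\<lambda>j. sorted_list_of_set X ! j) ` {..<card X} = X"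
proof -
  have s: "sorted_wrt (<) (sorted_list_of_set X)" by (simp add: strict_sorted_list_of_set)
  have l: "length (sorted_list_of_set X) = card X" by simp
  show "strict_mono_on {..<card X} (\<lambda>j. sorted_list_of_set X ! j)"
  proof (rule strict_mono_onI)
    fix x y assume "x \<in> {..<card X}" "y \<in> {..<card X}" "x < y"
    then show "sorted_list_of_set X ! x < sorted_list_of_set X ! y"
      using sorted_wrt_nth_less[OF s, of x y] l by simp
  qed
  have e: "(\<lambda>j. xs ! j) ` {..<length xs} = set xs" for xs :: "nat list"
    by (auto simp: set_conv_nth)
  show "(\<lambda>j. sorted_list_of_set X ! j) ` {..<card X} = X"
    using e[of "sorted_list_of_set X"] l assms by simp
qed

lemma smono_inj: "strict_mono_on A (f::nat\<Rightarrow>nat) \<Longrightarrow> inj_on f A"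
  by (rule strict_mono_on_imp_inj_on)

lemma smono_id:
  fixes q :: "nat \<Rightarrow> nat"
  assumes "strict_mono_on {..<n} q" "q ` {..<n} \<subseteq> {..<n}"
  shows "\<forall>j<n. q j = j"
proof -
  have ge: "j < n \<Longrightarrow> j \<le> q j" for j
  proof (induction j)
    case 0 then show ?case by simp
  next
    case (Suc j)
    then have "q j < q (Suc j)" using strict_mono_onD[OF assms(1)] by simp
    with Suc show ?case by simp
  qed
  have le: "d < n \<Longrightarrow> q (n - 1 - d) \<le> n - 1 - d" for d
  proof (induction d)
    case 0
    then have "n - 1 < n" by simp
    then have "q (n - 1) < n" using assms(2) by blast
    then show ?case by simp
  next
    case (Suc d)
    then have "q (n - 1 - Suc d) < q (n - 1 - d)" using strict_mono_onD[OF assms(1)] by simp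
    with Suc show ?case by simp
  qed
  show ?thesis
  proof (intro allI impI)
    fix j assume "j < n"
    with le[of "n - 1 - j"] ge[of j] show "q j = j" by simp
  qed
qed

definition Sset :: "(nat \<Rightarrow> nat) \<Rightarrow> nat \<Rightarrow> nat \<Rightarrow> nat \<Rightarrow> (nat \<Rightarrow> nat) \<Rightarrow> (nat \<Rightarrow> nat) \<Rightarrow> nat set" where
  "Sset \<sigma> n r c f g = {j. j < n \<and> (\<sigma> j \<in> f ` {..<r} \<or> j \<in> g ` {..<c})}"

lemma card_S:
  assumes perm: "\<sigma> permutes {..<n}"
    and f: "strict_mono_on {..<r} f" "f ` {..<r} \<subseteq> {..<n}"
    and g: "strict_mono_on {..<c} g" "g ` {..<c} \<subseteq> {..<n}"
    and A: "\<forall>i<r. \<forall>j<c. A i j = perm_mat \<sigma> (f i) (g j)"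
  shows "card (Sset \<sigma> n r c f g) + card {j. j < c \<and> (\<exists>i<r. A i j)} = r + c"
proof -
  define R where "R = {j. j < n \<and> \<sigma> j \<in> f ` {..<r}}"
  define G where "G = g ` {..<c}"
  define Z where "Z = {j. j < c \<and> (\<exists>i<r. A i j)}"
  have SU: "Sset \<sigma> n r c f g = R \<union> G" using g(2) unfolding Sset_def R_def G_def by auto
  have inj\<sigma>: "inj_on \<sigma> R" using permutes_inj_on[OF perm] .
  have "\<sigma> ` R = f ` {..<r}"
  proof
    show "\<sigma> ` R \<subseteq> f ` {..<r}" unfolding R_def by auto
    show "f ` {..<r} \<subseteq> \<sigma> ` R"
    proof
      fix x assume x: "x \<in> f ` {..<r}"
      then have xn: "x < n" using f(2) by auto
      define j where "j = inv \<sigma> x"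
      have sj: "\<sigma> j = x" unfolding j_def using permutes_inverses(1)[OF perm] by simp
      have "j < n" using xn sj permutes_in_image[OF perm, of j] by simp
      then show "x \<in> \<sigma> ` R" using sj x unfolding R_def by blast
    qed
  qed
  then have cR: "card R = r"
    using card_image[OF inj\<sigma>] card_image[OF smono_inj[OF f(1)]] by simp
  have cG: "card G = c" unfolding G_def using card_image[OF smono_inj[OF g(1)]] by simp
  have RG: "R \<inter> G = g ` Z"
  proof
    show "R \<inter> G \<subseteq> g ` Z"
    proof
      fix x assume "x \<in> R \<inter> G"
      then obtain j i where j: "j < c" "x = g j" and i: "i < r" "\<sigma> x = f i"
        unfolding R_def G_def by auto
      then have "A i j" using A unfolding perm_mat_def by auto
      then show "x \<in> g ` Z" using i j unfolding Z_def by blast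
    qed
    show "g ` Z \<subseteq> R \<inter> G"
    proof
      fix x assume "x \<in> g ` Z"
      then obtain j i where j: "j < c" "x = g j" and i: "i < r" "A i j"
        unfolding Z_def by auto
      then have "f i = \<sigma> x" using A unfolding perm_mat_def by auto
      moreover have "x < n" using j g(2) by auto
      ultimately show "x \<in> R \<inter> G" using i j unfolding R_def G_def by (metis (mono_tags, lifting) IntI image_eqI lessThan_iff mem_Collect_eq)
    qed
  qed
  have cRG: "card (R \<inter> G) = card Z"
    unfolding RG by (rule card_image, rule inj_on_subset[OF smono_inj[OF g(1)]]) (auto simp: Z_def)
  have "finite R" "finite G" unfolding R_def G_def by auto
  from card_Un_Int[OF this] show ?thesis using SU cR cG cRG Z_def by simp
qed

lemma pullback:
  assumes perm: "\<sigma> permutes {..<n}"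
    and p: "strict_mono_on {..<m} p" "p ` {..<m} \<subseteq> {..<n}"
    and q: "strict_mono_on {..<m} q" "q ` {..<m} \<subseteq> {..<n}"
    and img: "\<sigma> ` (q ` {..<m}) = p ` {..<m}"
  defines "\<tau> \<equiv> (\<lambda>j. if j < m then inv_into {..<m} p (\<sigma> (q j)) else j)"
  shows "\<tau> permutes {..<m}"
    and "\<forall>i<m. \<forall>j<m. perm_mat \<tau> i j = perm_mat \<sigma> (p i) (q j)"
proof -
  have injp: "inj_on p {..<m}" using smono_inj[OF p(1)] .
  have injq: "inj_on q {..<m}" using smono_inj[OF q(1)] .
  have pt: "j < m \<Longrightarrow> p (\<tau> j) = \<sigma> (q j) \<and> \<tau> j < m" for j
  proof -
    assume j: "j < m"
    then have "\<sigma> (q j) \<in> p ` {..<m}" using img by blast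
    then show ?thesis unfolding \<tau>_def using j
      using f_inv_into_f[of _ p] inv_into_into[of _ p "{..<m}"] by auto
  qed
  have inj\<tau>: "inj_on \<tau> {..<m}"
  proof
    fix x y assume x: "x \<in> {..<m}" and y: "y \<in> {..<m}" and e: "\<tau> x = \<tau> y"
    then have "\<sigma> (q x) = \<sigma> (q y)" using pt by (metis lessThan_iff)
    then have "q x = q y" using permutes_inj[OF perm] by (simp add: inj_eq)
    then show "x = y" using injq x y by (simp add: inj_on_eq_iff)
  qed
  have sub: "\<tau> ` {..<m} \<subseteq> {..<m}" using pt by auto
  have "\<tau> ` {..<m} = {..<m}"
    by (rule card_subset_eq) (use sub card_image[OF inj\<tau>] in auto)
  then have "bij_betw \<tau> {..<m} {..<m}" using inj\<tau> by (simp add: bij_betw_def)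
  then show "\<tau> permutes {..<m}"
    by (rule bij_imp_permutes) (simp add: \<tau>_def)
  show "\<forall>i<m. \<forall>j<m. perm_mat \<tau> i j = perm_mat \<sigma> (p i) (q j)"
  proof (intro allI impI)
    fix i j assume i: "i < m" and j: "j < m"
    have "(i = \<tau> j) = (p i = p (\<tau> j))" using injp i pt[OF j] by (metis inj_on_eq_iff lessThan_iff)
    then show "perm_mat \<tau> i j = perm_mat \<sigma> (p i) (q j)" using pt[OF j] unfolding perm_mat_def by simp
  qed
qed

lemma inv_comp:
  fixes p f :: "nat \<Rightarrow> nat"
  assumes p: "strict_mono_on {..<m} p" and f: "strict_mono_on {..<r} f"
    and img: "f ` {..<r} \<subseteq> p ` {..<m}"
  shows "strict_mono_on {..<r} (\<lambda>i. inv_into {..<m} p (f i))"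
    and "(\<lambda>i. inv_into {..<m} p (f i)) ` {..<r} \<subseteq> {..<m}"
    and "\<forall>i<r. p (inv_into {..<m} p (f i)) = f i"
proof -
  have a: "i < r \<Longrightarrow> p (inv_into {..<m} p (f i)) = f i \<and> inv_into {..<m} p (f i) < m" for i
  proof -
    assume "i < r"
    then have "f i \<in> p ` {..<m}" using img by blast
    then show ?thesis using f_inv_into_f[of _ p] inv_into_into[of _ p "{..<m}"] by auto
  qed
  show "(\<lambda>i. inv_into {..<m} p (f i)) ` {..<r} \<subseteq> {..<m}" using a by auto
  show "\<forall>i<r. p (inv_into {..<m} p (f i)) = f i" using a by auto
  show "strict_mono_on {..<r} (\<lambda>i. inv_into {..<m} p (f i))"
  proof (rule strict_mono_onI)
    fix x y assume x: "x \<in> {..<r}" and y: "y \<in> {..<r}" and xy: "x < y"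
    have "f x < f y" using strict_mono_onD[OF f x y xy] .
    then have "p (inv_into {..<m} p (f x)) < p (inv_into {..<m} p (f y))" using a x y by simp
    then show "inv_into {..<m} p (f x) < inv_into {..<m} p (f y)"
      using strict_mono_on_less[OF p] a x y by (meson lessThan_iff)
  qed
qed

lemma comp_smono:
  fixes p f :: "nat \<Rightarrow> nat"
  assumes "strict_mono_on {..<m} p" "strict_mono_on {..<r} f" "f ` {..<r} \<subseteq> {..<m}"
  shows "strict_mono_on {..<r} (\<lambda>i. p (f i))"
  using assms by (auto intro!: strict_mono_onI dest: strict_mono_onD simp: image_subset_iff)

lemma S_sub: "Sset \<sigma> n r c f g \<subseteq> {..<n}" unfolding Sset_def by auto

lemma obtained_imp_minimal:
  assumes perm: "\<sigma> permutes {..<n}"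
    and ob: "obtained_by_insertion r c A n n (perm_mat \<sigma>)"
  shows "minimal_containing r c A n \<sigma>"
proof -
  obtain f g where f: "strict_mono_on {..<r} f" "f ` {..<r} \<subseteq> {..<n}"
    and g: "strict_mono_on {..<c} g" "g ` {..<c} \<subseteq> {..<n}"
    and A: "\<forall>i<r. \<forall>j<c. A i j = perm_mat \<sigma> (f i) (g j)"
    and row: "\<forall>i<n. i \<notin> f ` {..<r} \<longrightarrow>
               (\<exists>!j. j < n \<and> perm_mat \<sigma> i j) \<and>
               (\<forall>j<n. perm_mat \<sigma> i j \<longrightarrow> (\<exists>j'<c. j = g j' \<and> (\<forall>i'<r. \<not> A i' j')))"
    and col: "\<forall>j<n. j \<notin> g ` {..<c} \<longrightarrow>
               (\<exists>!i. i < n \<and> perm_mat \<sigma> i j) \<and>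
               (\<forall>i<n. perm_mat \<sigma> i j \<longrightarrow> (\<exists>i'<r. i = f i' \<and> (\<forall>j'<c. \<not> A i' j')))"
    using ob unfolding obtained_by_insertion_def by (elim exE conjE) (rule that; assumption)
  have sub: "submatrix r c A n n (perm_mat \<sigma>)"
    unfolding submatrix_def by (rule exI[of _ f], rule exI[of _ g]) (use f g A in auto)
  have Sall: "Sset \<sigma> n r c f g = {..<n}"
  proof
    show "Sset \<sigma> n r c f g \<subseteq> {..<n}" by (rule S_sub)
    show "{..<n} \<subseteq> Sset \<sigma> n r c f g"
    proof
      fix j assume j: "j \<in> {..<n}"
      show "j \<in> Sset \<sigma> n r c f g"
      proof (cases "j \<in> g ` {..<c}")
        case True then show ?thesis using j unfolding Sset_def by auto
      next
        case False
        have "\<sigma> j < n" using j permutes_in_image[OF perm] by simp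
        then obtain i' where "i' < r" "\<sigma> j = f i'" using col j False unfolding perm_mat_def by auto
        then show ?thesis using j unfolding Sset_def by auto
      qed
    qed
  qed
  have cnt: "n + card {j. j < c \<and> (\<exists>i<r. A i j)} = r + c"
    using card_S[OF perm f g A] Sall by simp
  show ?thesis unfolding minimal_containing_def
  proof (rule conjI[OF perm conjI[OF sub]], intro allI impI)
    fix m \<tau> assume H: "\<tau> permutes {..<m} \<and> submatrix r c A m m (perm_mat \<tau>) \<and> pattern_le m \<tau> n \<sigma>"
    then have perm\<tau>: "\<tau> permutes {..<m}" by blast
    obtain f' g' where f': "strict_mono_on {..<r} f'" "f' ` {..<r} \<subseteq> {..<m}"
      and g': "strict_mono_on {..<c} g'" "g' ` {..<c} \<subseteq> {..<m}"
      and A': "\<forall>i<r. \<forall>j<c. A i j = perm_mat \<tau> (f' i) (g' j)"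
      using H[THEN conjunct2, THEN conjunct1] unfolding submatrix_def by (elim exE conjE) (rule that; assumption)
    obtain p q where p: "strict_mono_on {..<m} p" "p ` {..<m} \<subseteq> {..<n}"
      and q: "strict_mono_on {..<m} q" "q ` {..<m} \<subseteq> {..<n}"
      and PQ: "\<forall>i<m. \<forall>j<m. perm_mat \<tau> i j = perm_mat \<sigma> (p i) (q j)"
      using H[THEN conjunct2, THEN conjunct2] unfolding pattern_le_def submatrix_def by (elim exE conjE) (rule that; assumption)
    define F where "F = (\<lambda>i. p (f' i))"
    define G where "G = (\<lambda>j. q (g' j))"
    have F: "strict_mono_on {..<r} F" "F ` {..<r} \<subseteq> {..<n}"
      unfolding F_def using comp_smono[OF p(1) f'] f'(2) p(2) by auto
    have G: "strict_mono_on {..<c} G" "G ` {..<c} \<subseteq> {..<n}"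
      unfolding G_def using comp_smono[OF q(1) g'] g'(2) q(2) by auto
    have AFG: "\<forall>i<r. \<forall>j<c. A i j = perm_mat \<sigma> (F i) (G j)"
      using A' PQ f'(2) g'(2) unfolding F_def G_def by (auto simp: image_subset_iff)
    have c2: "card (Sset \<sigma> n r c F G) = n" using card_S[OF perm F G AFG] cnt by simp
    have Ssub: "Sset \<sigma> n r c F G \<subseteq> q ` {..<m}"
    proof
      fix j assume "j \<in> Sset \<sigma> n r c F G"
      then have j: "j < n" and jj: "\<sigma> j \<in> F ` {..<r} \<or> j \<in> G ` {..<c}" unfolding Sset_def by auto
      from jj show "j \<in> q ` {..<m}"
      proof
        assume "j \<in> G ` {..<c}" then show ?thesis using g'(2) unfolding G_def by auto
      next
        assume "\<sigma> j \<in> F ` {..<r}"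
        then obtain i where i: "i < r" "\<sigma> j = p (f' i)" unfolding F_def by auto
        define l where "l = inv \<tau> (f' i)"
        have fi: "f' i < m" using i f'(2) by auto
        have tl: "\<tau> l = f' i" unfolding l_def using permutes_inverses(1)[OF perm\<tau>] by simp
        have lm: "l < m" using fi tl permutes_in_image[OF perm\<tau>, of l] by simp
        have "perm_mat \<tau> (f' i) l" using tl unfolding perm_mat_def by simp
        then have "p (f' i) = \<sigma> (q l)" using PQ fi lm unfolding perm_mat_def by blast
        then have "\<sigma> j = \<sigma> (q l)" using i by simp
        then have "j = q l" using permutes_inj[OF perm] by (simp add: inj_eq)
        then show ?thesis using lm by auto
      qed
    qed
    have "card (q ` {..<m}) = m" using card_image[OF smono_inj[OF q(1)]] by simp
    then have nm: "n \<le> m" using card_mono[OF _ Ssub] c2 by simp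
    have "m \<le> n" using card_mono[OF _ q(2)] \<open>card (q ` {..<m}) = m\<close> by simp
    then have mn: "m = n" using nm by simp
    have pid: "\<forall>j<n. p j = j" using smono_id p mn by simp
    have qid: "\<forall>j<n. q j = j" using smono_id q mn by simp
    have "\<tau> = \<sigma>"
    proof
      fix x show "\<tau> x = \<sigma> x"
      proof (cases "x < n")
        case True
        then have tx: "\<tau> x < n" using permutes_in_image[OF perm\<tau>, of x] mn by simp
        have "perm_mat \<tau> (\<tau> x) x" unfolding perm_mat_def by simp
        then have "perm_mat \<sigma> (p (\<tau> x)) (q x)" using PQ tx True mn by simp
        then show ?thesis using pid qid tx True unfolding perm_mat_def by simp
      next
        case False
        then show ?thesis using permutes_not_in[OF perm\<tau>] permutes_not_in[OF perm] mn by simp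
      qed
    qed
    then show "m = n \<and> \<tau> = \<sigma>" using mn by simp
  qed
qed

lemma minimal_imp_obtained:
  assumes min: "minimal_containing r c A n \<sigma>"
  shows "obtained_by_insertion r c A n n (perm_mat \<sigma>)"
proof -
  have perm: "\<sigma> permutes {..<n}" and sub: "submatrix r c A n n (perm_mat \<sigma>)"
    and minim: "\<And>m \<tau>. \<tau> permutes {..<m} \<Longrightarrow> submatrix r c A m m (perm_mat \<tau>) \<Longrightarrow> pattern_le m \<tau> n \<sigma>
        \<Longrightarrow> m = n \<and> \<tau> = \<sigma>"
    using min unfolding minimal_containing_def by blast+
  obtain f g where f: "strict_mono_on {..<r} f" "f ` {..<r} \<subseteq> {..<n}"
    and g: "strict_mono_on {..<c} g" "g ` {..<c} \<subseteq> {..<n}"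
    and A: "\<forall>i<r. \<forall>j<c. A i j = perm_mat \<sigma> (f i) (g j)"
    using sub unfolding submatrix_def by (elim exE conjE) (rule that; assumption)
  define S where "S = Sset \<sigma> n r c f g"
  define m where "m = card S"
  define q where "q = (\<lambda>j. sorted_list_of_set S ! j)"
  define p where "p = (\<lambda>j. sorted_list_of_set (\<sigma> ` S) ! j)"
  have Sn: "S \<subseteq> {..<n}" unfolding S_def by (rule S_sub)
  have finS: "finite S" using Sn finite_subset by blast
  have cs: "card (\<sigma> ` S) = m" unfolding m_def by (rule card_image, rule permutes_inj_on[OF perm])
  have q: "strict_mono_on {..<m} q" "q ` {..<m} = S"
    unfolding q_def m_def using enum_set[OF finS] by auto
  have p: "strict_mono_on {..<m} p" "p ` {..<m} = \<sigma> ` S"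
    unfolding p_def using enum_set[of "\<sigma> ` S"] finS cs by auto
  have sSn: "\<sigma> ` S \<subseteq> {..<n}" using Sn permutes_in_image[OF perm] by auto
  define \<tau> where "\<tau> = (\<lambda>j. if j < m then inv_into {..<m} p (\<sigma> (q j)) else j)"
  have pb: "\<tau> permutes {..<m}" "\<forall>i<m. \<forall>j<m. perm_mat \<tau> i j = perm_mat \<sigma> (p i) (q j)"
    using pullback[OF perm p(1) _ q(1)] p(2) q(2) Sn sSn unfolding \<tau>_def by auto
  have fS: "f ` {..<r} \<subseteq> p ` {..<m}"
  proof
    fix x assume x: "x \<in> f ` {..<r}"
    then have xn: "x < n" using f(2) by auto
    define j where "j = inv \<sigma> x"
    have sj: "\<sigma> j = x" unfolding j_def using permutes_inverses(1)[OF perm] by simp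
    have "j < n" using xn sj permutes_in_image[OF perm, of j] by simp
    then have "j \<in> S" using sj x unfolding S_def Sset_def by blast
    then show "x \<in> p ` {..<m}" using p(2) sj by blast
  qed
  have gS: "g ` {..<c} \<subseteq> q ` {..<m}" using g(2) q(2) unfolding S_def Sset_def by auto
  note F = inv_comp[OF p(1) f(1) fS]
  note G = inv_comp[OF q(1) g(1) gS]
  have "submatrix r c A m m (perm_mat \<tau>)"
    unfolding submatrix_def
  proof (intro exI conjI)
    show "\<forall>i<r. \<forall>j<c. A i j = perm_mat \<tau> (inv_into {..<m} p (f i)) (inv_into {..<m} q (g j))"
      using A pb(2) F(2,3) G(2,3) by (auto simp: image_subset_iff)
  qed (use F G in auto)
  moreover have "pattern_le m \<tau> n \<sigma>"
    unfolding pattern_le_def submatrix_def by (rule exI[of _ p], rule exI[of _ q]) (use p q pb(2) Sn sSn in auto)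
  ultimately have "m = n" using minim pb(1) by blast
  then have Sall: "S = {..<n}" using Sn finS m_def by (metis card_lessThan card_subset_eq finite_lessThan)
  show ?thesis unfolding obtained_by_insertion_def
  proof (intro exI conjI)
    show "strict_mono_on {..<r} f" "f ` {..<r} \<subseteq> {..<n}" "strict_mono_on {..<c} g" "g ` {..<c} \<subseteq> {..<n}"
      "\<forall>i<r. \<forall>j<c. A i j = perm_mat \<sigma> (f i) (g j)" using f g A by auto
    show "\<forall>i<n. i \<notin> f ` {..<r} \<longrightarrow>
               (\<exists>!j. j < n \<and> perm_mat \<sigma> i j) \<and>
               (\<forall>j<n. perm_mat \<sigma> i j \<longrightarrow> (\<exists>j'<c. j = g j' \<and> (\<forall>i'<r. \<not> A i' j')))"
    proof (intro allI impI, rule conjI)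
      fix i assume i: "i < n" and nf: "i \<notin> f ` {..<r}"
      define j where "j = inv \<sigma> i"
      have sj: "\<sigma> j = i" unfolding j_def using permutes_inverses(1)[OF perm] by simp
      have jn: "j < n" using i sj permutes_in_image[OF perm, of j] by simp
      show "\<exists>!j. j < n \<and> perm_mat \<sigma> i j"
      proof (rule ex1I[of _ j])
        show "j < n \<and> perm_mat \<sigma> i j" using jn sj unfolding perm_mat_def by simp
        fix y assume "y < n \<and> perm_mat \<sigma> i y"
        then have "\<sigma> y = \<sigma> j" using sj unfolding perm_mat_def by simp
        then show "y = j" using permutes_inj[OF perm] by (simp add: inj_eq)
      qed
      show "\<forall>j<n. perm_mat \<sigma> i j \<longrightarrow> (\<exists>j'<c. j = g j' \<and> (\<forall>i'<r. \<not> A i' j'))"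
      proof (intro allI impI)
        fix y assume y: "y < n" and pm: "perm_mat \<sigma> i y"
        then have "y \<in> S" using Sall by simp
        moreover have "\<sigma> y \<notin> f ` {..<r}" using pm nf unfolding perm_mat_def by simp
        ultimately obtain j' where j': "j' < c" "y = g j'" unfolding S_def Sset_def by auto
        have "\<forall>i'<r. \<not> A i' j'"
        proof (intro allI impI notI)
          fix i' assume i': "i' < r" "A i' j'"
          then have "f i' = \<sigma> y" using A j' unfolding perm_mat_def by auto
          then have "i \<in> f ` {..<r}" using pm i' unfolding perm_mat_def by (metis image_eqI lessThan_iff)
          then show False using nf by simp
        qed
        then show "\<exists>j'<c. y = g j' \<and> (\<forall>i'<r. \<not> A i' j')" using j' by blast
      qed
    qed
    show "\<forall>j<n. j \<notin> g ` {..<c} \<longrightarrow>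
               (\<exists>!i. i < n \<and> perm_mat \<sigma> i j) \<and>
               (\<forall>i<n. perm_mat \<sigma> i j \<longrightarrow> (\<exists>i'<r. i = f i' \<and> (\<forall>j'<c. \<not> A i' j')))"
    proof (intro allI impI, rule conjI)
      fix j assume j: "j < n" and ng: "j \<notin> g ` {..<c}"
      have sjn: "\<sigma> j < n" using j permutes_in_image[OF perm] by simp
      show "\<exists>!i. i < n \<and> perm_mat \<sigma> i j"
        using sjn unfolding perm_mat_def by auto
      show "\<forall>i<n. perm_mat \<sigma> i j \<longrightarrow> (\<exists>i'<r. i = f i' \<and> (\<forall>j'<c. \<not> A i' j'))"
      proof (intro allI impI)
        fix i assume "i < n" and pm: "perm_mat \<sigma> i j"
        have "j \<in> S" using Sall j by simp
        then obtain i' where i': "i' < r" "\<sigma> j = f i'" using ng unfolding S_def Sset_def by auto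
        have "\<forall>j'<c. \<not> A i' j'"
        proof (intro allI impI notI)
          fix j' assume "j' < c" "A i' j'"
          then have "f i' = \<sigma> (g j')" using A i' unfolding perm_mat_def by auto
          then have "j = g j'" using i' permutes_inj[OF perm] by (simp add: inj_eq)
          then show False using ng \<open>j' < c\<close> by auto
        qed
        then show "\<exists>i'<r. i = f i' \<and> (\<forall>j'<c. \<not> A i' j')" using i' pm unfolding perm_mat_def by auto
      qed
    qed
  qed
qed

theorem proposition9:
  fixes r c :: nat and A :: "nat \<Rightarrow> nat \<Rightarrow> bool"
  assumes "quasi_perm r c A"
  shows "\<forall>n \<sigma>. \<sigma> permutes {..<n} \<longrightarrow>
           (minimal_containing r c A n \<sigma> \<longleftrightarrow>
            obtained_by_insertion r c A n n (perm_mat \<sigma>))"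
  using minimal_imp_obtained obtained_imp_minimal by blast

end
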